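(* If the critical set $C_{\mathcal A,a}$ is nonempty, then it is a smooth $n$-dimensional subvariety of $U(\mathcal A)\subset\mathbb C^n\times\mathbb C^k$.
   Context: Let $0<k<n$, $J=\{1,\dots,n\}$. On $\mathbb C^k$ (coordinates $t_1,\dots,t_k$) fix nonzero linear functions $g_j=b^1_jt_1+\dots+b^k_jt_k$, $j\in J$, that span the dual space $(\mathbb C^k)^*$. On $\mathbb C^n\times\mathbb C^k$ (coordinates $z_1,\dots,z_n,t_1,\dots,t_k$) let $f_j=g_j+z_j$, $H_j=\{f_j=0\}$, and $U(\mathcal A)=\mathbb C^n\times\mathbb C^k\setminus\bigcup_jH_j$. Fix $a\in(\mathbb C^\times)^n$ and the (multivalued) master function $\Phi_{\mathcal A,a}=\sum_ja_j\log f_j$. The critical set is $C_{\mathcal A,a}=\{(x,u)\in U(\mathcal A):\partial\Phi_{\mathcal A,a}/\partial t_i(x,u)=0,\ i=1,\dots,k\}$, where $\partial\Phi_{\mathcal A,a}/\partial t_i=\sum_jb^i_ja_j/f_j$. *)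

theory Defs
  imports "HOL-Analysis.Analysis"
begin

text \<open>Ambient space: C^n x C^k, points (x,u) with x :: complex^'n (the z-coordinates)
  and u :: complex^'k (the t-coordinates). The coefficient b^i_j is  b j $ i.\<close>

definition cscale :: "complex \<Rightarrow> ((complex^'n) \<times> (complex^'k)) \<Rightarrow> ((complex^'n) \<times> (complex^'k))" where
  "cscale c p = (c *s fst p, c *s snd p)"

definition holo_map_on ::
  "((complex^'n) \<times> (complex^'k)) set \<Rightarrow> (((complex^'n) \<times> (complex^'k)) \<Rightarrow> ((complex^'n) \<times> (complex^'k))) \<Rightarrow> bool" where
  "holo_map_on S f \<longleftrightarrow> (\<forall>p\<in>S. \<exists>D. (f has_derivative D) (at p) \<and>
      (\<forall>v. D (cscale \<i> v) = cscale \<i> (D v)))"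

definition holo_fun_on ::
  "((complex^'n) \<times> (complex^'k)) set \<Rightarrow> (((complex^'n) \<times> (complex^'k)) \<Rightarrow> complex) \<Rightarrow> bool" where
  "holo_fun_on S h \<longleftrightarrow> (\<forall>p\<in>S. \<exists>D. (h has_derivative D) (at p) \<and>
      (\<forall>v. D (cscale \<i> v) = \<i> * D v))"

definition analytic_subvariety ::
  "((complex^'n) \<times> (complex^'k)) set \<Rightarrow> ((complex^'n) \<times> (complex^'k)) set \<Rightarrow> bool" where
  "analytic_subvariety U M \<longleftrightarrow> M \<subseteq> U \<and> closedin (top_of_set U) M \<and>
     (\<forall>p\<in>U. \<exists>W F. open W \<and> p \<in> W \<and> W \<subseteq> U \<and> finite F \<and>
        (\<forall>h\<in>F. holo_fun_on W h) \<and> M \<inter> W = {q\<in>W. \<forall>h\<in>F. h q = 0})"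

text \<open>M is a smooth complex submanifold of dimension CARD('n) of C^n x C^k:
  around each of its points there is a biholomorphic chart of the ambient space
  straightening M onto the coordinate subspace C^n x {0}.\<close>
definition smooth_submanifold_dimn :: "((complex^'n) \<times> (complex^'k)) set \<Rightarrow> bool" where
  "smooth_submanifold_dimn M \<longleftrightarrow> (\<forall>p\<in>M. \<exists>W V \<phi> \<psi>.
      open W \<and> p \<in> W \<and> open V \<and> \<phi> ` W = V \<and> \<psi> ` V = W \<and>
      (\<forall>w\<in>W. \<psi> (\<phi> w) = w) \<and> (\<forall>v\<in>V. \<phi> (\<psi> v) = v) \<and>
      holo_map_on W \<phi> \<and> holo_map_on V \<psi> \<and>
      \<phi> ` (M \<inter> W) = V \<inter> {q. snd q = 0})"

definition gfun :: "('n \<Rightarrow> complex^'k) \<Rightarrow> 'n \<Rightarrow> complex^'k \<Rightarrow> complex" where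
  "gfun b j t = (\<Sum>i\<in>UNIV. b j $ i * t $ i)"

definition ffun :: "('n \<Rightarrow> complex^'k) \<Rightarrow> 'n \<Rightarrow> ((complex^'n) \<times> (complex^'k)) \<Rightarrow> complex" where
  "ffun b j p = gfun b j (snd p) + fst p $ j"

definition Ucomp :: "('n \<Rightarrow> complex^'k) \<Rightarrow> ((complex^'n) \<times> (complex^'k)) set" where
  "Ucomp b = {p. \<forall>j. ffun b j p \<noteq> 0}"

definition crit_set :: "('n \<Rightarrow> complex^'k) \<Rightarrow> complex^'n \<Rightarrow> ((complex^'n) \<times> (complex^'k)) set" where
  "crit_set b a = {p \<in> Ucomp b. \<forall>i. (\<Sum>j\<in>UNIV. b j $ i * a $ j / ffun b j p) = 0}"

end

theory Submission
  imports Defs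
begin


lemma bounded_linear_axis: "bounded_linear (axis j :: 'a::real_normed_vector \<Rightarrow> 'a^'n::finite)"
proof (rule bounded_linear_intro[where K=1])
  fix x y :: 'a
  show "axis j (x + y) = axis j x + (axis j y :: 'a^'n)" by (simp add: vec_eq_iff axis_def)
next
  fix r x show "axis j (r *\<^sub>R x) = r *\<^sub>R (axis j x :: 'a^'n)" by (simp add: vec_eq_iff axis_def)
next
  fix x :: 'a
  have "norm (axis j x :: 'a^'n) = sqrt ((\<Sum>i\<in>UNIV. (if i = j then (norm x)\<^sup>2 else 0)))"
    unfolding norm_vec_def L2_set_def by (rule arg_cong[where f=sqrt], rule sum.cong, auto simp: axis_def)
  also have "\<dots> = norm x" by simp
  finally show "norm (axis j x :: 'a^'n) \<le> norm x * 1" by simp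
qed

lemma vec_sum_axis: "(f::'a::real_normed_vector^'n::finite) = (\<Sum>j\<in>UNIV. axis j (f $ j))"
  by (simp add: vec_eq_iff sum_component axis_def)

lemma has_derivative_vec_lambda:
  fixes f :: "'b::real_normed_vector \<Rightarrow> 'a::real_normed_vector^'n::finite"
  assumes "\<And>j. ((\<lambda>x. f x $ j) has_derivative (\<lambda>h. f' h $ j)) F"
  shows "(f has_derivative f') F"
proof -
  have "((\<lambda>x. \<Sum>j\<in>UNIV. axis j (f x $ j)) has_derivative (\<lambda>h. \<Sum>j\<in>UNIV. axis j (f' h $ j))) F"
    by (intro has_derivative_sum bounded_linear.has_derivative[OF bounded_linear_axis] assms)
  then show ?thesis by (simp flip: vec_sum_axis)
qed

lemma ffun_deriv: "(ffun b j has_derivative ffun b j) (at p)"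
  unfolding ffun_def[abs_def] gfun_def
  by (auto intro!: derivative_eq_intros bounded_linear.has_derivative[OF bounded_linear_vec_nth])

lemma ffun_cscale: "ffun b j (cscale c v) = c * ffun b j v"
  by (simp add: ffun_def gfun_def cscale_def sum_distrib_left algebra_simps)




definition Aop :: "('n::finite \<Rightarrow> complex^'k::finite) \<Rightarrow> complex^'n \<Rightarrow> complex^'n \<Rightarrow> complex^'k" where
  "Aop b a w = (\<chi> i. \<Sum>j\<in>UNIV. b j $ i * a $ j * w $ j)"

definition Phi :: "('n::finite \<Rightarrow> complex^'k::finite) \<Rightarrow> complex^'n \<Rightarrow> 'n set \<Rightarrow> ('n \<Rightarrow> 'k)
   \<Rightarrow> ((complex^'n) \<times> (complex^'k)) \<Rightarrow> ((complex^'n) \<times> (complex^'k))" where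
  "Phi b a J e p = ((\<chi> j. if j \<in> J then snd p $ e j else fst p $ j), Aop b a (fst p))"

lemma vec_scaleR_c: "(r *\<^sub>R (v::complex^'n::finite)) $ i = of_real r * v $ i"
  unfolding vector_scaleR_component by (simp add: scaleR_conv_of_real)

lemma Phi_linear: "linear (Phi b a J e)"
  by (rule linearI) (auto simp: Phi_def Aop_def vec_eq_iff vec_scaleR_c sum_distrib_left
         sum.distrib algebra_simps simp del: vector_scaleR_component)

lemma Phi_cscale: "Phi b a J e (cscale c v) = cscale c (Phi b a J e v)"
  by (auto simp: Phi_def Aop_def cscale_def vec_eq_iff sum_distrib_left algebra_simps)

lemma Aop_eq: "Aop b a w = (\<Sum>j\<in>UNIV. (a $ j * w $ j) *s b j)"
  by (simp add: Aop_def vec_eq_iff sum_component algebra_simps)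

lemma Phi_kernel:
  fixes b :: "'n::finite \<Rightarrow> complex^'k::finite" and e :: "'n \<Rightarrow> 'k"
  assumes inj: "inj_on b J" and ind: "vec.independent (b ` J)" and e: "bij_betw e J UNIV"
    and a: "\<forall>j. a $ j \<noteq> 0" and z: "Phi b a J e p = 0"
  shows "p = 0"
proof -
  obtain w t where p: "p = (w, t)" by force
  have w0: "w $ j = 0" if "j \<notin> J" for j
  proof -
    have "fst (Phi b a J e p) $ j = 0" using z by simp
    then show ?thesis using that by (simp add: Phi_def p)
  qed
  have t0: "t = 0"
  proof (subst vec_eq_iff, intro allI)
    fix i :: 'k
    obtain j where "j \<in> J" "e j = i" using e by (metis bij_betw_def UNIV_I imageE)
    moreover have "fst (Phi b a J e p) $ j = 0" using z by simp
    ultimately show "t $ i = 0 $ i" by (simp add: Phi_def p)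
  qed
  have A0: "(\<Sum>j\<in>UNIV. (a $ j * w $ j) *s b j) = 0"
    using z by (simp add: Phi_def p zero_prod_def flip: Aop_eq)
  have "(\<Sum>j\<in>UNIV. (a $ j * w $ j) *s b j) = (\<Sum>j\<in>J. (a $ j * w $ j) *s b j)"
    by (rule sum.mono_neutral_right) (auto simp: w0)
  also have "\<dots> = (\<Sum>v\<in>b ` J. (\<lambda>v. a $ inv_into J b v * w $ inv_into J b v) v *s v)"
    by (subst sum.reindex[OF inj]) (auto intro!: sum.cong simp: inv_into_f_f[OF inj])
  finally have S: "(\<Sum>v\<in>b ` J. (\<lambda>v. a $ inv_into J b v * w $ inv_into J b v) v *s v) = 0"
    using A0 by simp
  have wJ: "w $ j = 0" if "j \<in> J" for j
  proof (rule ccontr)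
    assume "w $ j \<noteq> 0"
    then have "\<exists>v\<in>b ` J. (\<lambda>v. a $ inv_into J b v * w $ inv_into J b v) v \<noteq> 0"
      using that a by (intro bexI[of _ "b j"]) (auto simp: inv_into_f_f[OF inj])
    then have "vec.dependent (b ` J)" using S
      by (subst vec.dependent_finite) (auto intro!: exI[of _ "\<lambda>v. a $ inv_into J b v * w $ inv_into J b v"])
    then show False using ind by simp
  qed
  have "w = 0" using w0 wJ by (auto simp: vec_eq_iff)
  then show ?thesis using t0 p by (simp add: zero_prod_def)
qed

lemma Phi_inj:
  assumes "inj_on b J" "vec.independent (b ` J)" "bij_betw e J UNIV" "\<forall>j. a $ j \<noteq> 0"
  shows "inj (Phi b a J e)"
proof (rule injI)
  fix x y assume "Phi b a J e x = Phi b a J e y"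
  then have "Phi b a J e (x - y) = 0" by (simp add: linear_diff[OF Phi_linear])
  then show "x = y" by (metis Phi_kernel[OF assms] eq_iff_diff_eq_0)
qed




definition om :: "('n::finite \<Rightarrow> complex^'k::finite) \<Rightarrow> ((complex^'n) \<times> (complex^'k)) \<Rightarrow> complex^'n" where
  "om b p = (\<chi> j. inverse (ffun b j p))"

definition F1 :: "('n::finite \<Rightarrow> complex^'k::finite) \<Rightarrow> ((complex^'n) \<times> (complex^'k)) \<Rightarrow> ((complex^'n) \<times> (complex^'k))" where
  "F1 b p = (om b p, snd p)"

definition F2 :: "('n::finite \<Rightarrow> complex^'k::finite) \<Rightarrow> ((complex^'n) \<times> (complex^'k)) \<Rightarrow> ((complex^'n) \<times> (complex^'k))" where
  "F2 b q = ((\<chi> j. inverse (fst q $ j) - gfun b j (snd q)), snd q)"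

lemma gfun_deriv: "((\<lambda>q. gfun b j (snd q)) has_derivative (\<lambda>q. gfun b j (snd q))) (at p)"
  unfolding gfun_def
  by (auto intro!: derivative_eq_intros bounded_linear.has_derivative[OF bounded_linear_vec_nth])

lemma gfun_cscale: "gfun b j (snd (cscale c v)) = c * gfun b j (snd v)"
  by (simp add: gfun_def cscale_def sum_distrib_left algebra_simps)

lemma F1_deriv:
  assumes "p \<in> Ucomp b"
  shows "(F1 b has_derivative (\<lambda>v. ((\<chi> j. - (inverse (ffun b j p) * ffun b j v * inverse (ffun b j p))), snd v))) (at p)"
  unfolding F1_def[abs_def]
proof (rule has_derivative_Pair)
  show "(snd has_derivative snd) (at p)" by (rule has_derivative_snd[OF has_derivative_ident])
  show "(om b has_derivative (\<lambda>v. \<chi> j. - (inverse (ffun b j p) * ffun b j v * inverse (ffun b j p)))) (at p)"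
  proof (rule has_derivative_vec_lambda)
    fix j
    have "ffun b j p \<noteq> 0" using assms by (simp add: Ucomp_def)
    then show "((\<lambda>x. om b x $ j) has_derivative
          (\<lambda>h. (\<chi> j. - (inverse (ffun b j p) * ffun b j h * inverse (ffun b j p))) $ j)) (at p)"
      unfolding om_def by (auto intro!: derivative_eq_intros ffun_deriv)
  qed
qed

lemma F2_deriv:
  assumes "\<forall>j. fst q $ j \<noteq> 0"
  shows "(F2 b has_derivative (\<lambda>v. ((\<chi> j. - (inverse (fst q $ j) * fst v $ j * inverse (fst q $ j)) - gfun b j (snd v)), snd v))) (at q)"
  unfolding F2_def[abs_def]
proof (rule has_derivative_Pair)
  show "(snd has_derivative snd) (at q)" by (rule has_derivative_snd[OF has_derivative_ident])
  show "((\<lambda>q. \<chi> j. inverse (fst q $ j) - gfun b j (snd q)) has_derivative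
     (\<lambda>v. \<chi> j. - (inverse (fst q $ j) * fst v $ j * inverse (fst q $ j)) - gfun b j (snd v))) (at q)"
  proof (rule has_derivative_vec_lambda)
    fix j
    have "fst q $ j \<noteq> 0" using assms by simp
    moreover have "((\<lambda>x. fst x $ j) has_derivative (\<lambda>x. fst x $ j)) (at q)"
      by (rule bounded_linear.has_derivative[OF bounded_linear_vec_nth]) (rule has_derivative_fst[OF has_derivative_ident])
    ultimately show "((\<lambda>x. (\<chi> j. inverse (fst x $ j) - gfun b j (snd x)) $ j) has_derivative
          (\<lambda>h. (\<chi> j. - (inverse (fst q $ j) * fst h $ j * inverse (fst q $ j)) - gfun b j (snd h)) $ j)) (at q)"
      by (auto intro!: derivative_eq_intros gfun_deriv)
  qed
qed




lemma exists_J: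
  fixes b :: "'n::finite \<Rightarrow> complex^'k::finite"
  assumes "vec.span (range b) = UNIV"
  obtains J and e :: "'n \<Rightarrow> 'k" where "inj_on b J" "vec.independent (b ` J)" "bij_betw e J UNIV"
proof -
  obtain B where B: "B \<subseteq> range b" "vec.independent B" "range b \<subseteq> vec.span B"
    by (rule vec.maximal_independent_subset)
  have "UNIV \<subseteq> vec.span B" using assms B(3)
    by (metis vec.span_mono vec.span_span)
  then have "card B = vec.dim (UNIV :: (complex^'k) set)"
    using B(2) by (intro vec.basis_card_eq_dim) auto
  then have cB: "card B = CARD('k)" by (metis vec_dim_card)
  obtain J where J: "inj_on b J" "B = b ` J" using B(1) subset_image_inj[of B b UNIV] by blast
  have "card J = CARD('k)" using J cB by (simp add: card_image)
  then obtain e :: "'n \<Rightarrow> 'k" where "bij_betw e J UNIV"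
    using finite_same_card_bij[of J "UNIV :: 'k set"] by auto
  then show ?thesis using that J B(2) by blast
qed




lemma D1_cscale: "(\<lambda>v. ((\<chi> j. - (inverse (ffun b j p) * ffun b j v * inverse (ffun b j p))), snd v)) (cscale c v)
   = cscale c ((\<lambda>v. ((\<chi> j. - (inverse (ffun b j p) * ffun b j v * inverse (ffun b j p))), snd v)) v)"
  unfolding ffun_cscale by (simp add: cscale_def vec_eq_iff mult_ac)

lemma D2_cscale: "(\<lambda>v. ((\<chi> j. - (inverse (fst q $ j) * fst v $ j * inverse (fst q $ j)) - gfun b j (snd v)), snd v)) (cscale c v)
   = cscale c ((\<lambda>v. ((\<chi> j. - (inverse (fst q $ j) * fst v $ j * inverse (fst q $ j)) - gfun b j (snd v)), snd v)) v)"
  using gfun_cscale[of b _ c v]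
  by (simp add: cscale_def vec_eq_iff right_diff_distrib)

lemma F21: "F2 b (F1 b p) = p"
  by (simp add: F1_def F2_def om_def ffun_def vec_eq_iff prod_eq_iff)

lemma F12: "F1 b (F2 b q) = q"
  by (simp add: F1_def F2_def om_def ffun_def vec_eq_iff prod_eq_iff)

lemma open_Ucomp: "open (Ucomp b)"
proof -
  have "Ucomp b = (\<Inter>j. {p. ffun b j p \<noteq> 0})" by (auto simp: Ucomp_def)
  moreover have "open {p. ffun b j p \<noteq> 0}" for j
  proof (rule open_Collect_neq)
    show "continuous_on UNIV (ffun b j)"
      by (rule has_derivative_continuous_on[of UNIV _ "\<lambda>_. ffun b j"]) (simp add: ffun_deriv)
  qed (rule continuous_on_const)
  ultimately show ?thesis by (auto intro!: open_INT)
qed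

lemma open_G: "open {w::complex^'n::finite. \<forall>j. w $ j \<noteq> 0}"
proof -
  have "{w::complex^'n. \<forall>j. w $ j \<noteq> 0} = (\<Inter>j. {w. w $ j \<noteq> 0})" by auto
  moreover have "open {w::complex^'n. w $ j \<noteq> 0}" for j
    by (rule open_Collect_neq) (auto intro!: linear_continuous_on bounded_linear_vec_nth)
  ultimately show ?thesis by (auto intro!: open_INT)
qed




theorem lemma3p5:
  fixes b :: "'n::finite \<Rightarrow> complex^'k::finite" and a :: "complex^'n"
  assumes "CARD('k) < CARD('n)"
    and "\<forall>j. gfun b j \<noteq> (\<lambda>t. 0)"
    and "vec.span (range b) = UNIV"
    and "\<forall>j. a $ j \<noteq> 0"
    and "crit_set b a \<noteq> {}"
  shows "analytic_subvariety (Ucomp b) (crit_set b a) \<and> smooth_submanifold_dimn (crit_set b a)"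
proof -
  obtain J and e :: "'n \<Rightarrow> 'k" where J: "inj_on b J" "vec.independent (b ` J)" "bij_betw e J UNIV"
    using exists_J[OF assms(3)] by blast
  define \<Phi> where "\<Phi> = Phi b a J e"
  have lin\<Phi>: "linear \<Phi>" by (simp add: \<Phi>_def Phi_linear)
  have inj\<Phi>: "inj \<Phi>" unfolding \<Phi>_def by (rule Phi_inj[OF J assms(4)])
  have surj\<Phi>: "surj \<Phi>" using lin\<Phi> inj\<Phi> by (rule linear_injective_imp_surjective) (rule refl)
  define \<Psi> where "\<Psi> = inv \<Phi>"
  have \<Psi>\<Phi>: "\<Psi> (\<Phi> x) = x" for x by (simp add: \<Psi>_def inj\<Phi>)
  have \<Phi>\<Psi>: "\<Phi> (\<Psi> y) = y" for y by (simp add: \<Psi>_def surj\<Phi> surj_f_inv_f)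
  have lin\<Psi>: "linear \<Psi>" unfolding \<Psi>_def by (rule inj_linear_imp_inv_linear[OF lin\<Phi> inj\<Phi>])
  have bl\<Phi>: "bounded_linear \<Phi>" using lin\<Phi> by (simp add: linear_linear)
  have bl\<Psi>: "bounded_linear \<Psi>" using lin\<Psi> by (simp add: linear_linear)
  have \<Phi>c: "\<Phi> (cscale c v) = cscale c (\<Phi> v)" for c v by (simp add: \<Phi>_def Phi_cscale)
  have \<Psi>c: "\<Psi> (cscale c v) = cscale c (\<Psi> v)" for c v
    by (metis \<Phi>\<Psi> \<Psi>\<Phi> \<Phi>c)
  define W where "W = Ucomp b"
  define G where "G = {w::complex^'n. \<forall>j. w $ j \<noteq> 0}"
  define \<phi> where "\<phi> = (\<lambda>p. \<Phi> (F1 b p))"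
  define \<psi> where "\<psi> = (\<lambda>q. F2 b (\<Psi> q))"
  define V where "V = \<phi> ` W"
  have F1G: "F1 b p \<in> G \<times> UNIV" if "p \<in> W" for p
    using that by (simp add: W_def Ucomp_def G_def F1_def om_def)
  have F2W: "F2 b q \<in> W" if "q \<in> G \<times> UNIV" for q
    using that by (auto simp: W_def Ucomp_def G_def F2_def ffun_def)
  have Veq: "V = \<Psi> -` (G \<times> UNIV)"
  proof
    show "V \<subseteq> \<Psi> -` (G \<times> UNIV)" using F1G by (auto simp: V_def \<phi>_def \<Psi>\<Phi>)
    show "\<Psi> -` (G \<times> UNIV) \<subseteq> V"
    proof
      fix q assume "q \<in> \<Psi> -` (G \<times> UNIV)"
      then have "F2 b (\<Psi> q) \<in> W" "\<phi> (F2 b (\<Psi> q)) = q" using F2W by (auto simp: \<phi>_def F12 \<Phi>\<Psi>)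
      then show "q \<in> V" unfolding V_def by (metis image_eqI)
    qed
  qed
  have openW: "open W" by (simp add: W_def open_Ucomp)
  have openV: "open V" unfolding Veq
    by (rule open_vimage) (auto intro!: open_Times linear_continuous_on bl\<Psi> simp: G_def open_G)
  have \<psi>\<phi>: "\<psi> (\<phi> p) = p" for p by (simp add: \<psi>_def \<phi>_def \<Psi>\<Phi> F21)
  have \<phi>\<psi>: "\<phi> (\<psi> q) = q" if "q \<in> V" for q using that by (auto simp: V_def \<psi>\<phi>)
  have \<psi>V: "\<psi> ` V = W"
    unfolding V_def image_image \<psi>\<phi> by simp
  have der\<phi>: "\<exists>D. (\<phi> has_derivative D) (at p) \<and> (\<forall>v. D (cscale c v) = cscale c (D v))"
    if "p \<in> W" for p c
  proof -
    note d = bounded_linear.has_derivative[OF bl\<Phi> F1_deriv[of p b]]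
    have pW: "p \<in> Ucomp b" using that by (simp add: W_def)
    show ?thesis unfolding \<phi>_def
      by (rule exI, rule conjI, rule d[OF pW], rule allI, simp only: D1_cscale \<Phi>c)
  qed
  have der\<psi>: "\<exists>D. (\<psi> has_derivative D) (at q) \<and> (\<forall>v. D (cscale c v) = cscale c (D v))"
    if "q \<in> V" for q c
  proof -
    have "\<forall>j. fst (\<Psi> q) $ j \<noteq> 0" using that by (auto simp: Veq G_def)
    note d = has_derivative_compose[OF bounded_linear.has_derivative[OF bl\<Psi> has_derivative_ident] F2_deriv[OF this, of b]]
    show ?thesis unfolding \<psi>_def
      by (rule exI, rule conjI, rule d, rule allI, simp only: D2_cscale \<Psi>c)
  qed
  have Ceq: "crit_set b a = {p \<in> W. snd (\<phi> p) = 0}"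
    by (auto simp: crit_set_def W_def \<phi>_def \<Phi>_def Phi_def F1_def Aop_def om_def vec_eq_iff divide_inverse)
  have cont: "continuous_on W (\<lambda>p. snd (\<phi> p))"
  proof (rule continuous_at_imp_continuous_on, rule ballI)
    fix p assume "p \<in> W"
    then obtain D where D: "(\<phi> has_derivative D) (at p)" using der\<phi> by blast
    show "isCont (\<lambda>p. snd (\<phi> p)) p"
      by (rule has_derivative_continuous[OF has_derivative_snd[OF D]])
  qed
  have part1: "analytic_subvariety (Ucomp b) (crit_set b a)"
    unfolding analytic_subvariety_def
  proof (intro conjI ballI)
    show "crit_set b a \<subseteq> Ucomp b" by (auto simp: crit_set_def)
    show "closedin (top_of_set (Ucomp b)) (crit_set b a)"
      unfolding Ceq W_def[symmetric] by (rule continuous_closedin_preimage_constant[OF cont])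
    fix p assume "p \<in> Ucomp b"
    show "\<exists>W' F. open W' \<and> p \<in> W' \<and> W' \<subseteq> Ucomp b \<and> finite F \<and> (\<forall>h\<in>F. holo_fun_on W' h) \<and>
          crit_set b a \<inter> W' = {q \<in> W'. \<forall>h\<in>F. h q = 0}"
    proof (intro exI conjI)
      show "open W" by (rule openW)
      show "p \<in> W" using \<open>p \<in> Ucomp b\<close> by (simp add: W_def)
      show "W \<subseteq> Ucomp b" by (simp add: W_def)
      show "finite (range (\<lambda>i q. snd (\<phi> q) $ i))" by simp
      show "\<forall>h\<in>range (\<lambda>i q. snd (\<phi> q) $ i). holo_fun_on W h"
      proof (rule ballI)
        fix h assume "h \<in> range (\<lambda>i q. snd (\<phi> q) $ i)"
        then obtain i where hi: "h = (\<lambda>q. snd (\<phi> q) $ i)" by blast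
        show "holo_fun_on W h" unfolding holo_fun_on_def hi
      proof (rule ballI)
        fix q assume "q \<in> W"
        then obtain D where D: "(\<phi> has_derivative D) (at q)" "\<forall>v. D (cscale \<i> v) = cscale \<i> (D v)"
          using der\<phi> by blast
        have "((\<lambda>q. snd (\<phi> q) $ i) has_derivative (\<lambda>v. snd (D v) $ i)) (at q)"
          by (rule bounded_linear.has_derivative[OF bounded_linear_vec_nth]) (rule has_derivative_snd[OF D(1)])
        moreover have "\<forall>v. snd (D (cscale \<i> v)) $ i = \<i> * snd (D v) $ i"
          using D(2) by (simp add: cscale_def)
        ultimately show "\<exists>D. ((\<lambda>q. snd (\<phi> q) $ i) has_derivative D) (at q) \<and> (\<forall>v. D (cscale \<i> v) = \<i> * D v)"
          by blast
      qed
      qed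
      show "crit_set b a \<inter> W = {q \<in> W. \<forall>h\<in>range (\<lambda>i q. snd (\<phi> q) $ i). h q = 0}"
        by (auto simp: Ceq vec_eq_iff)
    qed
  qed
  have part2: "smooth_submanifold_dimn (crit_set b a)"
    unfolding smooth_submanifold_dimn_def
  proof (rule ballI)
    fix p assume "p \<in> crit_set b a"
    then have pW: "p \<in> W" by (simp add: Ceq)
    have h1: "\<forall>w\<in>W. \<psi> (\<phi> w) = w" by (simp add: \<psi>\<phi>)
    have h2: "\<forall>v\<in>V. \<phi> (\<psi> v) = v" by (simp add: \<phi>\<psi>)
    have h3: "holo_map_on W \<phi>" unfolding holo_map_on_def using der\<phi> by blast
    have h4: "holo_map_on V \<psi>" unfolding holo_map_on_def using der\<psi> by blast
    have h5: "\<phi> ` (crit_set b a \<inter> W) = V \<inter> {q. snd q = 0}"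
      by (auto simp: Ceq V_def)
    have h6: "\<phi> ` W = V" by (simp add: V_def)
    show "\<exists>W V \<phi> \<psi>. open W \<and> p \<in> W \<and> open V \<and> \<phi> ` W = V \<and> \<psi> ` V = W \<and>
      (\<forall>w\<in>W. \<psi> (\<phi> w) = w) \<and> (\<forall>v\<in>V. \<phi> (\<psi> v) = v) \<and>
      holo_map_on W \<phi> \<and> holo_map_on V \<psi> \<and>
      \<phi> ` (crit_set b a \<inter> W) = V \<inter> {q. snd q = 0}"
      using openW pW openV h6 \<psi>V h1 h2 h3 h4 h5 by blast
  qed
  show ?thesis using part1 part2 by blast
qed


end
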